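(* Let $n\in\mathbb{N}$, $H\in\mathbb{R}^{n\times n}$, $W\in\mathbb{R}^{n\times n}$ with $W\succ 0$, let $C=\mathrm{diag}(C_{11},\dots,C_{nn})$ be diagonal with all $C_{ii}\neq 0$, and let $V=\mathrm{diag}(\sigma_1^2,\dots,\sigma_n^2)$ with all $\sigma_i>0$. Assume $(H,C)$ is observable and $(H,D)$ is controllable, where $W=DD^T$. Let $\Sigma$ be the unique positive semidefinite solution of $$\Sigma = H\Sigma H^T - H\Sigma C^T(C\Sigma C^T+V)^{-1}C\Sigma H^T + W ,$$ and let $\overline{\Sigma}:=\Sigma-\Sigma C^T(C\Sigma C^T+V)^{-1}C\Sigma=(C^TV^{-1}C+\Sigma^{-1})^{-1}$. Then $$n\ln\!\left(\frac{\sigma_u^2}{C_u^2+\sigma_u^2\lambda_n(W)^{-1}}\right)\;\le\;\ln\det\overline{\Sigma}\;\le\; n\ln\!\left(\frac{\sigma_l^2}{C_l^2}\right).$$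
   Context: $\Sigma$ and $\overline\Sigma$ are the steady-state a priori and a posteriori error covariances of a Kalman filter for $x(k+1)=Hx(k)+w(k)$, $w(k)\sim\mathcal N(0,W)$, with privatized measurements $Cx(k)+v(k)$, $v(k)\sim\mathcal N(0,V)$. For a symmetric matrix $K$, $\lambda_n(K)\le\dots\le\lambda_1(K)$ denote its eigenvalues. Indices: $l:=\arg\min_{1\le i\le n} C_{ii}^2/\sigma_i^2$ and $u:=\arg\max_{1\le i\le n} C_{ii}^2/\sigma_i^2$; $C_l:=C_{ll}$, $C_u:=C_{uu}$, and $\sigma_l,\sigma_u$ are the corresponding $\sigma_i$. *)

theory Defs
  imports "HOL-Analysis.Analysis"
begin

definition symmetric_mat :: "real^'n^'n \<Rightarrow> bool" where
  "symmetric_mat A \<longleftrightarrow> transpose A = A"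

definition psd_mat :: "real^'n^'n \<Rightarrow> bool" where
  "psd_mat A \<longleftrightarrow> symmetric_mat A \<and> (\<forall>x. 0 \<le> x \<bullet> (A *v x))"

definition pd_mat :: "real^'n^'n \<Rightarrow> bool" where
  "pd_mat A \<longleftrightarrow> symmetric_mat A \<and> (\<forall>x. x \<noteq> 0 \<longrightarrow> 0 < x \<bullet> (A *v x))"

definition diag_mat :: "('n \<Rightarrow> real) \<Rightarrow> real^'n^'n" where
  "diag_mat d = (\<chi> i j. if i = j then d i else 0)"

definition is_diagonal :: "real^'n^'n \<Rightarrow> bool" where
  "is_diagonal A \<longleftrightarrow> (\<forall>i j. i \<noteq> j \<longrightarrow> A $ i $ j = 0)"

definition mat_pow :: "real^'n^'n \<Rightarrow> nat \<Rightarrow> real^'n^'n" where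
  "mat_pow A k = ((\<lambda>M. A ** M) ^^ k) (mat 1)"

text \<open>Observability of (H,C): the observability matrix [C; CH; ...; CH^(n-1)]
  has full column rank n, i.e. trivial kernel.\<close>
definition observable :: "real^'n^'n \<Rightarrow> real^'n^'p \<Rightarrow> bool" where
  "observable H C \<longleftrightarrow>
     (\<forall>x. (\<forall>k < CARD('n). (C ** mat_pow H k) *v x = 0) \<longrightarrow> x = 0)"

text \<open>Controllability of (H,D): the controllability matrix [D, HD, ..., H^(n-1) D]
  has full row rank n (duality with observability).\<close>
definition controllable :: "real^'n^'n \<Rightarrow> real^'m^'n \<Rightarrow> bool" where
  "controllable H D \<longleftrightarrow> observable (transpose H) (transpose D)"

text \<open>Smallest eigenvalue (for a symmetric matrix all eigenvalues are real).\<close>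
definition lambda_min :: "real^'n^'n \<Rightarrow> real" where
  "lambda_min A = Min {c. \<exists>v. v \<noteq> 0 \<and> A *v v = c *\<^sub>R v}"

end

theory Submission
  imports Defs
begin



lemma inner_transpose: "(transpose A *v x) \<bullet> y = x \<bullet> ((A::real^'n^'m) *v y)"
  by (simp add: dot_lmul_matrix)

lemma inner_sym: assumes "symmetric_mat A" shows "(A *v x) \<bullet> y = x \<bullet> ((A::real^'n^'n) *v y)"
proof -
  have "(A *v x) \<bullet> y = (transpose A *v x) \<bullet> y" using assms by (simp add: symmetric_mat_def)
  then show ?thesis by (simp only: inner_transpose)
qed

lemma inv_of_ker:
  fixes A :: "real^'n^'n"
  assumes "\<forall>x. A *v x = 0 \<longrightarrow> x = 0"
  shows "A ** matrix_inv A = mat 1" "matrix_inv A ** A = mat 1"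
proof -
  have "invertible A" using assms matrix_left_invertible_ker invertible_left_inverse by blast
  then have "\<exists>A'. A ** A' = mat 1 \<and> A' ** A = mat 1" by (simp add: invertible_def)
  then have "A ** matrix_inv A = mat 1 \<and> matrix_inv A ** A = mat 1"
    unfolding matrix_inv_def by (rule someI_ex)
  then show "A ** matrix_inv A = mat 1" "matrix_inv A ** A = mat 1" by auto
qed

lemma inv_sym:
  fixes A Ai :: "real^'n^'n"
  assumes "symmetric_mat A" "A ** Ai = mat 1" "Ai ** A = mat 1"
  shows "symmetric_mat Ai"
proof -
  have "transpose (Ai ** A) = mat 1" using assms by simp
  then have "transpose A ** transpose Ai = mat 1" by (simp only: matrix_transpose_mul)
  then have 1: "A ** transpose Ai = mat 1" using assms by (simp add: symmetric_mat_def)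
  have "transpose Ai = (Ai ** A) ** transpose Ai" using assms by simp
  also have "\<dots> = Ai" by (simp add: 1 matrix_mul_assoc[symmetric])
  finally show ?thesis by (simp add: symmetric_mat_def)
qed

lemma diag_mult_vec: "diag_mat d *v x = (\<chi> i. d i * x $ i)"
  proof -
  have "\<And>i. (\<Sum>j\<in>UNIV. (if i = j then d i else 0) * x $ j) = d i * x $ i"
  proof -
    fix i
    have "(\<Sum>j\<in>UNIV. (if i = j then d i else 0) * x $ j) = (\<Sum>j\<in>UNIV. if i = j then d i * x $ j else 0)"
      by (rule sum.cong) auto
    then show "(\<Sum>j\<in>UNIV. (if i = j then d i else 0) * x $ j) = d i * x $ i" by simp
  qed
  then show ?thesis by (simp add: diag_mat_def matrix_vector_mult_def vec_eq_iff)
qed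

lemma diag_quad: "x \<bullet> (diag_mat d *v x) = (\<Sum>i\<in>UNIV. d i * (x $ i)\<^sup>2)"
  by (simp add: diag_mult_vec inner_vec_def power2_eq_square mult_ac)

lemma norm_sq_vec: "(norm (x::real^'n))\<^sup>2 = (\<Sum>i\<in>UNIV. (x $ i)\<^sup>2)"
  proof -
  have "(norm x)\<^sup>2 = x \<bullet> x" by (simp add: power2_norm_eq_inner)
  then show ?thesis by (simp add: inner_vec_def power2_eq_square)
qed

lemma diag_sym: "symmetric_mat (diag_mat d)"
  by (simp add: symmetric_mat_def diag_mat_def transpose_def vec_eq_iff)

lemma is_diag_eq: "is_diagonal C \<Longrightarrow> C = diag_mat (\<lambda>i. C $ i $ i)"
  by (auto simp: is_diagonal_def diag_mat_def vec_eq_iff)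

lemma diag_bounds:
  assumes "\<forall>i. c \<le> d i" "\<forall>i. d i \<le> r"
  shows "c * (norm x)\<^sup>2 \<le> x \<bullet> (diag_mat d *v x)" "x \<bullet> (diag_mat d *v x) \<le> r * (norm x)\<^sup>2"
  unfolding diag_quad norm_sq_vec sum_distrib_left
  using assms by (auto intro!: sum_mono mult_right_mono)

lemma quad_zero:
  fixes a b :: real
  assumes "\<forall>t. 0 \<le> 2*t*a + t\<^sup>2*b"
  shows "a = 0"
proof -
  define k where "k = \<bar>b\<bar> + 1"
  have k: "k > 0" "b \<le> k" by (auto simp: k_def)
  have "0 \<le> 2*(-a/k)*a + (-a/k)\<^sup>2*b" using assms by blast
  then have "0 \<le> k\<^sup>2 * (2*(-a/k)*a + (-a/k)\<^sup>2*b)" using k by simp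
  also have "\<dots> = -2*a*a*k + a*a*b" using k by (simp add: field_simps power2_eq_square)
  also have "\<dots> \<le> -2*a*a*k + a*a*k"
  proof -
    have "a*a*b \<le> a*a*k" using k by (intro mult_left_mono) auto
    then show ?thesis by linarith
  qed
  finally have "0 \<le> - (a*a) * k" by simp
  then have "a*a \<le> 0" using k by (simp add: mult_le_0_iff zero_le_mult_iff)
  then have "a*a = 0" using zero_le_square[of a] by linarith
  then show ?thesis by simp
qed




lemma quad_expand:
  fixes A :: "real^'n^'n"
  assumes "symmetric_mat A"
  shows "(v + t *\<^sub>R y) \<bullet> (A *v (v + t *\<^sub>R y)) = v \<bullet> (A *v v) + 2*t*(y \<bullet> (A *v v)) + t\<^sup>2 * (y \<bullet> (A *v y))"
proof -
  have s: "v \<bullet> (A *v y) = y \<bullet> (A *v v)" using inner_sym[OF assms, of y v] by (simp add: inner_commute)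
  show ?thesis
    by (simp add: matrix_vector_right_distrib matrix_vector_mult_scaleR inner_add_left inner_add_right s power2_eq_square algebra_simps)
qed

lemma rayleigh_min:
  fixes A :: "real^'n^'n"
  assumes sym: "symmetric_mat A" and S: "subspace S" and ne: "\<exists>x\<in>S. x \<noteq> 0"
    and inv: "\<forall>x\<in>S. A *v x \<in> S"
  shows "\<exists>v\<in>S. norm v = 1 \<and> A *v v = (v \<bullet> (A *v v)) *\<^sub>R v \<and>
           (\<forall>x\<in>S. (v \<bullet> (A *v v)) * (norm x)\<^sup>2 \<le> x \<bullet> (A *v x))"
proof -
  let ?T = "S \<inter> sphere 0 1"
  have cT: "compact ?T" using S by (intro closed_Int_compact closed_subspace compact_sphere)
  obtain x0 where x0: "x0 \<in> S" "x0 \<noteq> 0" using ne by blast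
  have "(1/norm x0) *\<^sub>R x0 \<in> ?T" using x0 S by (simp add: subspace_scale)
  then have neT: "?T \<noteq> {}" by blast
  have cf: "continuous_on ?T (\<lambda>x. x \<bullet> (A *v x))"
    by (intro continuous_intros linear_continuous_on) (auto intro: bounded_linearI')
  obtain v where v: "v \<in> ?T" and vmin: "\<forall>y\<in>?T. v \<bullet> (A *v v) \<le> y \<bullet> (A *v y)"
    using continuous_attains_inf[OF cT neT cf] by blast
  define m where "m = v \<bullet> (A *v v)"
  have vS: "v \<in> S" and nv: "norm v = 1" using v by auto
  have bound: "m * (norm x)\<^sup>2 \<le> x \<bullet> (A *v x)" if xS: "x \<in> S" for x
  proof (cases "x = 0")
    case True then show ?thesis by simp
  next
    case False
    let ?y = "(1/norm x) *\<^sub>R x"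
    have "?y \<in> ?T" using xS False S by (simp add: subspace_scale)
    then have "m \<le> ?y \<bullet> (A *v ?y)" using vmin m_def by blast
    also have "\<dots> = (x \<bullet> (A *v x)) / (norm x)\<^sup>2"
      by (simp add: matrix_vector_mult_scaleR power2_eq_square)
    finally show ?thesis using False by (simp add: pos_le_divide_eq)
  qed
  have key: "y \<bullet> (A *v v - m *\<^sub>R v) = 0" if yS: "y \<in> S" for y
  proof -
    have "0 \<le> 2*t*(y \<bullet> (A *v v - m *\<^sub>R v)) + t\<^sup>2*(y \<bullet> (A *v y) - m * (norm y)\<^sup>2)" for t
    proof -
      have "v + t *\<^sub>R y \<in> S" using vS yS S by (simp add: subspace_add subspace_scale)
      then have "m * (norm (v + t *\<^sub>R y))\<^sup>2 \<le> (v + t *\<^sub>R y) \<bullet> (A *v (v + t *\<^sub>R y))" by (rule bound)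
      moreover have "(norm (v + t *\<^sub>R y))\<^sup>2 = 1 + 2*t*(v \<bullet> y) + t\<^sup>2 * (norm y)\<^sup>2"
      proof -
        have "(norm (v + t *\<^sub>R y))\<^sup>2 = (v + t *\<^sub>R y) \<bullet> (v + t *\<^sub>R y)" by (simp add: power2_norm_eq_inner)
        also have "\<dots> = v \<bullet> v + 2*t*(v \<bullet> y) + t\<^sup>2 * (y \<bullet> y)"
          by (simp add: inner_add_left inner_add_right inner_commute power2_eq_square algebra_simps)
        finally show ?thesis using nv by (simp add: power2_norm_eq_inner[symmetric])
      qed
      ultimately show ?thesis
        unfolding quad_expand[OF sym] m_def[symmetric]
        by (simp add: inner_diff_right algebra_simps inner_commute)
    qed
    then show ?thesis by (intro quad_zero) blast
  qed
  have "A *v v - m *\<^sub>R v \<in> S" using vS S inv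
    by (simp add: subspace_diff subspace_scale)
  from key[OF this] have "A *v v = m *\<^sub>R v" by simp
  then show ?thesis using vS nv bound m_def by blast
qed




lemma spectral_subspace:
  fixes A :: "real^'n^'n"
  assumes sym: "symmetric_mat A"
  shows "subspace S \<Longrightarrow> (\<forall>x\<in>S. A *v x \<in> S) \<Longrightarrow>
    \<exists>B. B \<subseteq> S \<and> finite B \<and> card B = dim S \<and> pairwise orthogonal B \<and>
        (\<forall>b\<in>B. norm b = 1 \<and> (\<exists>\<mu>. A *v b = \<mu> *\<^sub>R b))"
proof (induction "dim S" arbitrary: S rule: less_induct)
  case (less S)
  show ?case
  proof (cases "\<exists>x\<in>S. x \<noteq> 0")
    case False
    then have "S \<subseteq> {0}" by auto
    then have "dim S = 0" by simp
    then show ?thesis by (intro exI[of _ "{}"]) auto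
  next
    case True
    obtain v where vS: "v \<in> S" and nv: "norm v = 1" and ev: "A *v v = (v \<bullet> (A *v v)) *\<^sub>R v"
      using rayleigh_min[OF sym less.prems(1) True less.prems(2)] by blast
    define m where "m = v \<bullet> (A *v v)"
    define S' where "S' = {x\<in>S. v \<bullet> x = 0}"
    have sub': "subspace S'" using less.prems(1) unfolding S'_def subspace_def
      by (auto simp: inner_add_right)
    have inv': "\<forall>x\<in>S'. A *v x \<in> S'"
    proof
      fix x assume x: "x \<in> S'"
      have "v \<bullet> (A *v x) = (A *v v) \<bullet> x" using inner_sym[OF sym, of v x] by simp
      also have "\<dots> = m * (v \<bullet> x)" using ev m_def by (metis inner_scaleR_left)
      finally show "A *v x \<in> S'" using x less.prems(2) by (auto simp: S'_def)
    qed
    have vnot: "v \<notin> S'" using nv by (auto simp: S'_def power2_norm_eq_inner[symmetric])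
    have span_eq: "span (insert v S') = S"
    proof
      show "span (insert v S') \<subseteq> S"
        using vS less.prems(1) by (intro span_minimal) (auto simp: S'_def)
      show "S \<subseteq> span (insert v S')"
      proof
        fix x assume xS: "x \<in> S"
        have "x - (v \<bullet> x) *\<^sub>R v \<in> S'"
          using xS vS less.prems(1) nv
          by (auto simp: S'_def subspace_diff subspace_scale inner_diff_right power2_norm_eq_inner[symmetric])
        then have "x - (v \<bullet> x) *\<^sub>R v \<in> span (insert v S')" by (simp add: span_base)
        moreover have "(v \<bullet> x) *\<^sub>R v \<in> span (insert v S')" by (simp add: span_base span_mul)
        ultimately have "(x - (v \<bullet> x) *\<^sub>R v) + (v \<bullet> x) *\<^sub>R v \<in> span (insert v S')" by (rule span_add)
        then show "x \<in> span (insert v S')" by simp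
      qed
    qed
    have "v \<notin> span S'" using vnot sub' by (metis span_eq_iff)
    then have dimS: "dim S = dim S' + 1"
      using span_eq dim_insert[of v S'] by (metis dim_span)
    then have "dim S' < dim S" by simp
    then obtain B' where B': "B' \<subseteq> S'" "finite B'" "card B' = dim S'" "pairwise orthogonal B'"
        "\<forall>b\<in>B'. norm b = 1 \<and> (\<exists>\<mu>. A *v b = \<mu> *\<^sub>R b)"
      using less.hyps sub' inv' by blast
    have vB': "v \<notin> B'" using B'(1) vnot by blast
    show ?thesis
    proof (intro exI[of _ "insert v B'"] conjI)
      show "insert v B' \<subseteq> S" using vS B'(1) by (auto simp: S'_def)
      show "finite (insert v B')" using B'(2) by simp
      show "card (insert v B') = dim S" using B'(2,3) vB' dimS by simp
      show "pairwise orthogonal (insert v B')"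
        using B'(1,4) vB' by (auto simp: pairwise_insert S'_def orthogonal_def inner_commute)
      show "\<forall>b\<in>insert v B'. norm b = 1 \<and> (\<exists>\<mu>. A *v b = \<mu> *\<^sub>R b)"
        using B'(5) nv ev by blast
    qed
  qed
qed




lemma QMQ_entry:
  fixes M :: "real^'n^'n" and g :: "'n \<Rightarrow> real^'n"
  defines "Q \<equiv> (\<chi> i j. g j $ i)"
  shows "(transpose Q ** M ** Q) $ j $ k = g j \<bullet> (M *v g k)"
proof -
  have "(transpose Q ** M ** Q) $ j $ k = (\<Sum>l\<in>UNIV. (\<Sum>i\<in>UNIV. g j $ i * M $ i $ l) * g k $ l)"
    by (simp add: Q_def matrix_matrix_mult_def transpose_def)
  also have "\<dots> = (\<Sum>i\<in>UNIV. g j $ i * (\<Sum>l\<in>UNIV. M $ i $ l * g k $ l))"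
  proof -
    have "(\<Sum>l\<in>UNIV. (\<Sum>i\<in>UNIV. g j $ i * M $ i $ l) * g k $ l) = (\<Sum>l\<in>UNIV. \<Sum>i\<in>UNIV. g j $ i * (M $ i $ l * g k $ l))"
      by (simp add: sum_distrib_right mult.assoc)
    also have "\<dots> = (\<Sum>i\<in>UNIV. \<Sum>l\<in>UNIV. g j $ i * (M $ i $ l * g k $ l))"
      by (rule sum.swap)
    also have "\<dots> = (\<Sum>i\<in>UNIV. g j $ i * (\<Sum>l\<in>UNIV. M $ i $ l * g k $ l))"
      by (simp add: sum_distrib_left)
    finally show ?thesis .
  qed
  also have "\<dots> = g j \<bullet> (M *v g k)"
    by (simp add: inner_vec_def matrix_vector_mult_def)
  finally show ?thesis .
qed

lemma det_bounds:
  fixes A :: "real^'n^'n"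
  assumes sym: "symmetric_mat A" and c0: "0 \<le> c"
    and lo: "\<forall>x. c * (norm x)\<^sup>2 \<le> x \<bullet> (A *v x)"
    and hi: "\<forall>x. x \<bullet> (A *v x) \<le> r * (norm x)\<^sup>2"
  shows "c ^ CARD('n) \<le> det A \<and> det A \<le> r ^ CARD('n)"
proof -
  obtain B where B: "finite B" "card B = dim (UNIV :: (real^'n) set)" "pairwise orthogonal B"
      "\<forall>b\<in>B. norm b = 1 \<and> (\<exists>\<mu>. A *v b = \<mu> *\<^sub>R b)"
    using spectral_subspace[OF sym, of UNIV] by auto
  have "card B = CARD('n)" using B(2) by simp
  then obtain g where g: "bij_betw g (UNIV::'n set) B"
    using finite_same_card_bij[of "UNIV::'n set" B] B(1) by auto
  have gB: "g j \<in> B" for j using g by (auto simp: bij_betw_def)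
  have ginj: "g j = g k \<Longrightarrow> j = k" for j k using g by (auto simp: bij_betw_def inj_def)
  have orth: "j \<noteq> k \<Longrightarrow> g j \<bullet> g k = 0" for j k
    using B(3) gB ginj by (metis orthogonal_def pairwise_def)
  have n1: "g j \<bullet> g j = 1" for j using B(4) gB by (metis norm_eq_1)
  define Q where "Q = (\<chi> i j. g j $ i)"
  have QQ: "transpose Q ** mat 1 ** Q = mat 1"
    by (simp only: vec_eq_iff Q_def QMQ_entry matrix_vector_mul_lid) (auto simp: mat_def orth n1)
  have off: "(transpose Q ** A ** Q) $ j $ k = 0" if "j \<noteq> k" for j k
  proof -
    obtain \<mu> where "A *v g k = \<mu> *\<^sub>R g k" using B(4) gB by blast
    then show ?thesis using orth[OF that] by (simp add: Q_def QMQ_entry)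
  qed
  have detQ: "det (transpose Q) * det Q = 1"
    using QQ by (metis det_I det_mul matrix_mul_rid)
  have "det A = det (transpose Q) * det A * det Q" using detQ by (simp add: algebra_simps)
  also have "\<dots> = det (transpose Q ** A ** Q)" by (simp add: det_mul)
  also have "\<dots> = (\<Prod>j\<in>UNIV. g j \<bullet> (A *v g j))"
    using off by (subst det_diagonal) (auto simp: Q_def QMQ_entry)
  finally have dA: "det A = (\<Prod>j\<in>UNIV. g j \<bullet> (A *v g j))" .
  have nn: "(norm (g j))\<^sup>2 = 1" for j using n1 by (simp add: power2_norm_eq_inner)
  have b1: "c \<le> g j \<bullet> (A *v g j)" for j using lo nn by (metis mult.right_neutral)
  have b2: "g j \<bullet> (A *v g j) \<le> r" for j using hi nn by (metis mult.right_neutral)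
  have "(\<Prod>j\<in>(UNIV::'n set). c) \<le> (\<Prod>j\<in>UNIV. g j \<bullet> (A *v g j))"
    using b1 c0 by (intro prod_mono) auto
  moreover have "(\<Prod>j\<in>(UNIV::'n set). g j \<bullet> (A *v g j)) \<le> (\<Prod>j\<in>(UNIV::'n set). r)"
  proof (rule prod_mono)
    fix j show "0 \<le> g j \<bullet> (A *v g j) \<and> g j \<bullet> (A *v g j) \<le> r" using b1[of j] b2[of j] c0 by linarith
  qed
  ultimately show ?thesis using dA by simp
qed




lemma lambda_min_prop:
  fixes W :: "real^'n^'n"
  assumes pd: "pd_mat W"
  shows "lambda_min W > 0 \<and> (\<forall>x. lambda_min W * (norm x)\<^sup>2 \<le> x \<bullet> (W *v x))"
proof -
  have sym: "symmetric_mat W" using pd by (simp add: pd_mat_def)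
  have ne: "\<exists>x\<in>(UNIV::(real^'n) set). x \<noteq> 0"
    by (rule bexI[of _ "axis undefined 1"]) (auto simp: axis_eq_0_iff)
  have inv: "\<forall>x\<in>UNIV. W *v x \<in> UNIV" by simp
  obtain v where nv: "norm v = 1" and ev: "W *v v = (v \<bullet> (W *v v)) *\<^sub>R v"
      and bnd: "\<forall>x. (v \<bullet> (W *v v)) * (norm x)\<^sup>2 \<le> x \<bullet> (W *v x)"
    using rayleigh_min[OF sym subspace_UNIV ne inv] by auto
  define m where "m = v \<bullet> (W *v v)"
  define E where "E = {c. \<exists>v. v \<noteq> 0 \<and> W *v v = c *\<^sub>R v}"
  have v0: "v \<noteq> 0" using nv by auto
  have mE: "m \<in> E" unfolding E_def m_def using v0 ev by auto
  have mle: "m \<le> c" if cE: "c \<in> E" for c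
  proof -
    obtain x where x: "x \<noteq> 0" "W *v x = c *\<^sub>R x" using cE unfolding E_def by auto
    have "m * (norm x)\<^sup>2 \<le> x \<bullet> (W *v x)" using bnd unfolding m_def by simp
    also have "\<dots> = c * (norm x)\<^sup>2" using x by (simp add: power2_norm_eq_inner)
    finally show ?thesis using x by simp
  qed
  define f where "f c = (SOME x. x \<noteq> 0 \<and> W *v x = c *\<^sub>R x)" for c
  have fE: "f c \<noteq> 0 \<and> W *v f c = c *\<^sub>R f c" if "c \<in> E" for c
  proof -
    have "\<exists>x. x \<noteq> 0 \<and> W *v x = c *\<^sub>R x" using that unfolding E_def by simp
    then show ?thesis unfolding f_def by (rule someI_ex)
  qed
  have injf: "inj_on f E"
  proof (rule inj_onI)
    fix c d assume c: "c \<in> E" and d: "d \<in> E" and eq: "f c = f d"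
    have "c *\<^sub>R f c = W *v f c" using fE[OF c] by simp
    also have "\<dots> = W *v f d" using eq by simp
    also have "\<dots> = d *\<^sub>R f c" using fE[OF d] eq by simp
    finally have "(c - d) *\<^sub>R f c = 0" by (simp add: scaleR_diff_left)
    then show "c = d" using fE[OF c] by simp
  qed
  have orth: "pairwise orthogonal (f ` E)"
  unfolding pairwise_def orthogonal_def
  proof (intro ballI impI)
    fix x y assume "x \<in> f ` E" "y \<in> f ` E" and ne: "x \<noteq> y"
    then obtain c d where c: "c \<in> E" and d: "d \<in> E" and xy: "x = f c" "y = f d" by blast
    then have cd: "c \<noteq> d" using ne by auto
    have "c * (f c \<bullet> f d) = (W *v f c) \<bullet> f d" using fE[OF c] by simp
    also have "\<dots> = f c \<bullet> (W *v f d)" by (rule inner_sym[OF sym])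
    also have "\<dots> = d * (f c \<bullet> f d)" using fE[OF d] by simp
    finally have "(c - d) * (f c \<bullet> f d) = 0" by (simp add: left_diff_distrib)
    then show "x \<bullet> y = 0" using cd xy by simp
  qed
  have "0 \<notin> f ` E" using fE by auto
  then have "independent (f ` E)" using orth pairwise_orthogonal_independent by blast
  then have "finite (f ` E)" using independent_bound by blast
  then have finE: "finite E" using injf finite_imageD by blast
  have "lambda_min W = m"
    unfolding lambda_min_def E_def[symmetric]
    using finE mE mle by (intro Min_eqI) auto
  moreover have "m > 0" using pd v0 m_def by (simp add: pd_mat_def)
  ultimately show ?thesis using bnd m_def by simp
qed




lemma transpose_add_mat: "transpose (A + B) = transpose A + transpose (B :: real^'n^'m)"
  by (simp add: transpose_def vec_eq_iff)

lemma inner_transpose': "x \<bullet> ((A::real^'n^'m) *v y) = (transpose A *v x) \<bullet> y"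
  by (simp only: inner_transpose)

theorem theorem4:
  fixes H W :: "real^'n^'n" and D :: "real^'m^'n"
    and C V \<Sigma> :: "real^'n^'n"
    and sigma :: "'n \<Rightarrow> real" and l u :: 'n
  assumes W_pd: "pd_mat W"
    and C_diag: "is_diagonal C" and C_nz: "\<forall>i. C $ i $ i \<noteq> 0"
    and sigma_pos: "\<forall>i. sigma i > 0"
    and V_def: "V = diag_mat (\<lambda>i. (sigma i)\<^sup>2)"
    and obs: "observable H C"
    and W_eq: "W = D ** transpose D"
    and ctrb: "controllable H D"
    and Sigma_psd: "psd_mat \<Sigma>"
    and DARE: "\<Sigma> = H ** \<Sigma> ** transpose H
        - H ** \<Sigma> ** transpose C ** matrix_inv (C ** \<Sigma> ** transpose C + V) ** C ** \<Sigma> ** transpose H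
        + W"
    and l_min: "\<forall>i. (C $ l $ l)\<^sup>2 / (sigma l)\<^sup>2 \<le> (C $ i $ i)\<^sup>2 / (sigma i)\<^sup>2"
    and u_max: "\<forall>i. (C $ i $ i)\<^sup>2 / (sigma i)\<^sup>2 \<le> (C $ u $ u)\<^sup>2 / (sigma u)\<^sup>2"
  shows "let \<Sigma>bar = \<Sigma> - \<Sigma> ** transpose C ** matrix_inv (C ** \<Sigma> ** transpose C + V) ** C ** \<Sigma>
         in real CARD('n) * ln ((sigma u)\<^sup>2 / ((C $ u $ u)\<^sup>2 + (sigma u)\<^sup>2 * inverse (lambda_min W)))
              \<le> ln (det \<Sigma>bar)
          \<and> ln (det \<Sigma>bar) \<le> real CARD('n) * ln ((sigma l)\<^sup>2 / (C $ l $ l)\<^sup>2)"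
proof -
  have symSig: "symmetric_mat \<Sigma>" and psdSig: "\<forall>x. 0 \<le> x \<bullet> (\<Sigma> *v x)"
    using Sigma_psd by (auto simp: psd_mat_def)
  define Vi where "Vi = diag_mat (\<lambda>i. 1 / (sigma i)\<^sup>2)"
  have VVi: "V *v (Vi *v x) = x" for x
    using sigma_pos by (simp add: V_def Vi_def diag_mult_vec vec_eq_iff less_imp_neq[symmetric])
  have Vpos: "0 < x \<bullet> (V *v x)" if x0: "x \<noteq> 0" for x
  proof -
    obtain i where i: "x $ i \<noteq> 0" using x0 by (auto simp: vec_eq_iff)
    show ?thesis unfolding V_def diag_quad
      using i sigma_pos by (intro sum_pos2[of UNIV i]) (auto intro!: mult_pos_pos simp: less_imp_neq[symmetric])
  qed
  have Vnn: "0 \<le> x \<bullet> (V *v x)" for x using Vpos[of x] by (cases "x = 0") auto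
  define S where "S = C ** \<Sigma> ** transpose C + V"
  have Svec: "S *v x = C *v (\<Sigma> *v (transpose C *v x)) + V *v x" for x
    by (simp only: S_def matrix_vector_mult_add_rdistrib matrix_vector_mul_assoc matrix_mul_assoc)
  have Sker: "\<forall>x. S *v x = 0 \<longrightarrow> x = 0"
  proof (intro allI impI)
    fix x assume "S *v x = 0"
    then have "0 = x \<bullet> (S *v x)" by simp
    also have "\<dots> = (transpose C *v x) \<bullet> (\<Sigma> *v (transpose C *v x)) + x \<bullet> (V *v x)"
      unfolding Svec inner_add_right inner_transpose' ..
    finally have "x \<bullet> (V *v x) \<le> 0" using psdSig by (metis add_nonneg_eq_0_iff order_refl Vnn)
    then show "x = 0" using Vpos by force
  qed
  define Si where "Si = matrix_inv S"
  have SSi: "S ** Si = mat 1" and SiS: "Si ** S = mat 1" using inv_of_ker[OF Sker] by (auto simp: Si_def)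
  have symS: "symmetric_mat S"
    using symSig diag_sym[of "\<lambda>i. (sigma i)\<^sup>2"]
    by (simp add: S_def symmetric_mat_def transpose_add_mat matrix_transpose_mul matrix_mul_assoc V_def)
  have symSi: "symmetric_mat Si" using inv_sym[OF symS SSi SiS] .
  define Sb where "Sb = \<Sigma> - \<Sigma> ** transpose C ** Si ** C ** \<Sigma>"
  have Sbvec: "Sb *v x = \<Sigma> *v x - \<Sigma> *v (transpose C *v (Si *v (C *v (\<Sigma> *v x))))" for x
    by (simp only: Sb_def matrix_vector_mult_diff_rdistrib matrix_vector_mul_assoc matrix_mul_assoc)
  have psdSb: "0 \<le> x \<bullet> (Sb *v x)" for x
  proof -
    define z where "z = C *v (\<Sigma> *v x)"
    define w where "w = Si *v z"
    define p where "p = transpose C *v w"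
    have Sw: "S *v w = z" using SSi by (simp add: w_def matrix_vector_mul_assoc)
    have e2: "p \<bullet> (\<Sigma> *v x) = w \<bullet> z" unfolding p_def z_def by (rule inner_transpose)
    have e1: "x \<bullet> (\<Sigma> *v p) = w \<bullet> z"
      using inner_sym[OF symSig, of x p] e2 by (simp only: inner_commute)
    have e3: "w \<bullet> (V *v w) + p \<bullet> (\<Sigma> *v p) = w \<bullet> z"
    proof -
      have "w \<bullet> z = w \<bullet> (S *v w)" using Sw by simp
      also have "\<dots> = w \<bullet> (C *v (\<Sigma> *v p)) + w \<bullet> (V *v w)" by (simp add: Svec p_def inner_add_right)
      also have "w \<bullet> (C *v (\<Sigma> *v p)) = p \<bullet> (\<Sigma> *v p)" unfolding p_def by (rule inner_transpose[symmetric])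
      finally show ?thesis by simp
    qed
    have "(x - p) \<bullet> (\<Sigma> *v (x - p)) = x \<bullet> (\<Sigma> *v x) - x \<bullet> (\<Sigma> *v p) - p \<bullet> (\<Sigma> *v x) + p \<bullet> (\<Sigma> *v p)"
      by (simp add: matrix_vector_mult_diff_distrib inner_diff_left inner_diff_right)
    then have "x \<bullet> (Sb *v x) = (x - p) \<bullet> (\<Sigma> *v (x - p)) + w \<bullet> (V *v w)"
    proof -
      have "Sb *v x = \<Sigma> *v x - \<Sigma> *v p" by (simp only: Sbvec p_def w_def z_def)
      then have "x \<bullet> (Sb *v x) = x \<bullet> (\<Sigma> *v x) - x \<bullet> (\<Sigma> *v p)" by (simp add: inner_diff_right)
      then show ?thesis using e1 e2 e3 \<open>(x - p) \<bullet> (\<Sigma> *v (x - p)) = _\<close> by linarith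
    qed
    then show ?thesis using psdSig Vnn by (metis add_nonneg_nonneg)
  qed

  have DAREv: "\<Sigma> *v x = H *v (Sb *v (transpose H *v x)) + W *v x" for x
  proof -
    have "\<Sigma> *v x = (H ** \<Sigma> ** transpose H
        - H ** \<Sigma> ** transpose C ** Si ** C ** \<Sigma> ** transpose H + W) *v x"
      using DARE unfolding S_def[symmetric] Si_def[symmetric] by (rule arg_cong)
    also have "\<dots> = H *v (Sb *v (transpose H *v x)) + W *v x"
      unfolding Sbvec by (simp only: matrix_vector_mult_diff_rdistrib matrix_vector_mult_add_rdistrib
          matrix_vector_mult_diff_distrib matrix_vector_mul_assoc matrix_mul_assoc)
    finally show ?thesis .
  qed
  define lam where "lam = lambda_min W"
  have lam_pos: "lam > 0" and Wb: "\<forall>x. lam * (norm x)\<^sup>2 \<le> x \<bullet> (W *v x)"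
    using lambda_min_prop[OF W_pd] by (auto simp: lam_def)
  have Sigb: "lam * (norm x)\<^sup>2 \<le> x \<bullet> (\<Sigma> *v x)" for x
  proof -
    have "x \<bullet> (\<Sigma> *v x) = (transpose H *v x) \<bullet> (Sb *v (transpose H *v x)) + x \<bullet> (W *v x)"
      unfolding DAREv inner_add_right inner_transpose' ..
    then show ?thesis using psdSb[of "transpose H *v x"] Wb by smt
  qed
  have Sigker: "\<forall>x. \<Sigma> *v x = 0 \<longrightarrow> x = 0"
  proof (intro allI impI)
    fix x assume "\<Sigma> *v x = 0"
    then have "lam * (norm x)\<^sup>2 \<le> 0" using Sigb[of x] by simp
    then show "x = 0" using lam_pos by (simp add: mult_le_0_iff)
  qed
  define Sgi where "Sgi = matrix_inv \<Sigma>"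
  have SSgi: "\<Sigma> ** Sgi = mat 1" and SgiS: "Sgi ** \<Sigma> = mat 1" using inv_of_ker[OF Sigker] by (auto simp: Sgi_def)
  have symSgi: "symmetric_mat Sgi" using inv_sym[OF symSig SSgi SgiS] .
  have Sgib: "0 \<le> x \<bullet> (Sgi *v x) \<and> x \<bullet> (Sgi *v x) \<le> (norm x)\<^sup>2 / lam" for x
  proof -
    define y where "y = Sgi *v x"
    have xy: "\<Sigma> *v y = x" using SSgi by (simp add: y_def matrix_vector_mul_assoc)
    define q where "q = y \<bullet> (\<Sigma> *v y)"
    have "x \<bullet> (Sgi *v x) = (\<Sigma> *v y) \<bullet> y" using xy y_def by simp
    then have qx: "x \<bullet> (Sgi *v x) = q" unfolding q_def by (simp add: inner_commute)
    have q1: "lam * (norm y)\<^sup>2 \<le> q" using Sigb q_def by simp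
    have q0: "0 \<le> q" using psdSig q_def by simp
    have "q \<le> norm x * norm y" unfolding q_def using norm_cauchy_schwarz[of y "\<Sigma> *v y"] xy by (simp add: mult.commute)
    then have "q * q \<le> (norm x * norm y) * (norm x * norm y)" using q0 by (intro mult_mono) auto
    also have "\<dots> = (norm x)\<^sup>2 * (norm y)\<^sup>2" by (simp add: power2_eq_square)
    finally have "lam * (q * q) \<le> (norm x)\<^sup>2 * (lam * (norm y)\<^sup>2)" using lam_pos
      by (simp add: mult_left_mono mult.left_commute)
    also have "\<dots> \<le> (norm x)\<^sup>2 * q" using q1 by (simp add: mult_left_mono)
    finally have "lam * q * q \<le> (norm x)\<^sup>2 * q" by (simp add: mult.assoc)
    then have "q = 0 \<or> lam * q \<le> (norm x)\<^sup>2" using q0 by (metis mult_right_le_imp_le order_le_less)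
    then have "q \<le> (norm x)\<^sup>2 / lam" using lam_pos by (auto simp: pos_le_divide_eq mult.commute)
    then show ?thesis using qx q0 by simp
  qed

  define Cd where "Cd i = C $ i $ i" for i
  have Ceq: "C = diag_mat Cd" using is_diag_eq[OF C_diag] by (simp add: Cd_def[abs_def])
  have Ct: "transpose C = C" using diag_sym[of Cd] Ceq by (simp add: symmetric_mat_def)
  define Dg where "Dg = diag_mat (\<lambda>i. (C $ i $ i)\<^sup>2 / (sigma i)\<^sup>2)"
  have Dgvec: "Dg *v x = transpose C *v (Vi *v (C *v x))" for x
    unfolding Ct by (simp add: Dg_def Vi_def Ceq diag_mult_vec vec_eq_iff Cd_def power2_eq_square)
  have VViC: "V *v (Vi *v (C *v x)) = C *v x" for x by (rule VVi)
  define B where "B = Dg + Sgi"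
  have symB: "symmetric_mat B"
    using symSgi diag_sym by (simp add: B_def Dg_def symmetric_mat_def transpose_add_mat)
  define c where "c = (C $ l $ l)\<^sup>2 / (sigma l)\<^sup>2"
  define d where "d = (C $ u $ u)\<^sup>2 / (sigma u)\<^sup>2"
  define mu where "mu = d + 1 / lam"
  have c_pos: "c > 0"
  proof -
    have "(C $ l $ l)\<^sup>2 > 0" "(sigma l)\<^sup>2 > 0" using C_nz sigma_pos[rule_format, of l] by auto
    then show ?thesis by (simp add: c_def)
  qed
  have Blo: "c * (norm x)\<^sup>2 \<le> x \<bullet> (B *v x)" and Bhi: "x \<bullet> (B *v x) \<le> mu * (norm x)\<^sup>2" for x
  proof -
    have eq: "x \<bullet> (B *v x) = x \<bullet> (Dg *v x) + x \<bullet> (Sgi *v x)"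
      by (simp add: B_def matrix_vector_mult_add_rdistrib inner_add_right)
    have "c * (norm x)\<^sup>2 \<le> x \<bullet> (Dg *v x)" unfolding Dg_def c_def
      using l_min u_max by (intro diag_bounds(1)) auto
    then show "c * (norm x)\<^sup>2 \<le> x \<bullet> (B *v x)" using eq Sgib[of x] by linarith
    have "x \<bullet> (Dg *v x) \<le> d * (norm x)\<^sup>2" unfolding Dg_def d_def
      using l_min u_max by (intro diag_bounds(2)) auto
    then show "x \<bullet> (B *v x) \<le> mu * (norm x)\<^sup>2" using eq Sgib[of x]
      by (simp add: mu_def distrib_right)
  qed
  have detB: "c ^ CARD('n) \<le> det B \<and> det B \<le> mu ^ CARD('n)"
    using det_bounds[OF symB _ ] c_pos Blo Bhi by (meson less_imp_le)
  have wood: "Sb *v (B *v x) = x" for x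
  proof -
    define uu where "uu = Vi *v (C *v x)"
    define a where "a = transpose C *v uu"
    define b where "b = Sgi *v x"
    have Bx: "B *v x = a + b" by (simp only: B_def matrix_vector_mult_add_rdistrib Dgvec a_def uu_def b_def)
    have Sb_b: "\<Sigma> *v b = x" using SSgi by (simp add: b_def matrix_vector_mul_assoc)
    have Ca: "C *v (\<Sigma> *v a) = S *v uu - C *v x"
      using Svec[of uu] VVi[of "C *v x"] by (simp add: a_def uu_def)
    have SiSu: "Si *v (S *v uu) = uu" using SiS by (simp add: matrix_vector_mul_assoc)
    have "Si *v (C *v (\<Sigma> *v (a + b))) = uu"
      by (simp add: matrix_vector_right_distrib Ca Sb_b matrix_vector_mult_diff_distrib SiSu)
    then have "Sb *v (a + b) = \<Sigma> *v (a + b) - \<Sigma> *v (transpose C *v uu)"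
      by (simp only: Sbvec)
    also have "\<dots> = \<Sigma> *v a + x - \<Sigma> *v a"
      by (simp only: matrix_vector_right_distrib Sb_b a_def)
    finally show ?thesis by (simp add: Bx)
  qed
  have SbB: "Sb ** B = mat 1"
    by (simp add: matrix_eq matrix_vector_mul_assoc[symmetric] wood)
  have detprod: "det Sb * det B = 1" using SbB by (metis det_I det_mul)
  have dBpos: "det B > 0" using detB c_pos by (meson order_less_le_trans zero_less_power)
  have "det Sb = inverse (det B)" using detprod dBpos by (simp add: field_simps)
  then have lnSb: "ln (det Sb) = - ln (det B)" using dBpos by (simp add: ln_inverse)
  have su: "(sigma u)\<^sup>2 > 0" using sigma_pos[rule_format, of u] by simp
  have cl: "(C $ l $ l)\<^sup>2 > 0" using C_nz by simp
  have d0: "d \<ge> 0" by (simp add: d_def)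
  have mu_pos: "mu > 0" using d0 lam_pos by (simp add: mu_def add_nonneg_pos)
  have e_mu: "(sigma u)\<^sup>2 / ((C $ u $ u)\<^sup>2 + (sigma u)\<^sup>2 * inverse lam) = inverse mu"
    using su lam_pos by (simp add: mu_def d_def field_simps)
  have e_c: "(sigma l)\<^sup>2 / (C $ l $ l)\<^sup>2 = inverse c" by (simp add: c_def)
  have l1: "ln (det B) \<le> real CARD('n) * ln mu"
    using detB dBpos mu_pos by (simp add: ln_realpow[symmetric])
  have l2: "real CARD('n) * ln c \<le> ln (det B)"
    using detB dBpos c_pos by (simp add: ln_realpow[symmetric])
  have eqSb: "\<Sigma> - \<Sigma> ** transpose C ** matrix_inv (C ** \<Sigma> ** transpose C + V) ** C ** \<Sigma> = Sb"
    by (simp add: Sb_def Si_def S_def)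
  show ?thesis
    unfolding Let_def eqSb lnSb lam_def[symmetric] e_mu e_c
    using l1 l2 mu_pos c_pos by (simp add: ln_inverse)
qed


end
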